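(* For every $n\ge0$, $$\langle P_n^{(\alpha,\beta,v)},P_n^{(\alpha,\beta,v)}\rangle_W=\frac{n!\,v\,B(\alpha+n+2,\beta+n+2)}{(\alpha+\beta+n+3)_n}\begin{pmatrix}\dfrac{(\kappa_{v,\beta}+2)(\kappa_{-v,\beta}+2n+4)}{\kappa_{v,-\beta}(\kappa_{v,\beta}+2n+2)}&0\\0&-\dfrac{(\kappa_{-v,\beta}+2)(\kappa_{v,\beta}+2n+4)}{\kappa_{-v,-\beta}(\kappa_{-v,\beta}+2n+2)}\end{pmatrix},$$ where $B$ is the Beta function. Consequently, writing $\|P_n^{(\alpha,\beta,v)}\|$ for the positive definite square root of this diagonal matrix, the polynomials $\widetilde P_n=\|P_n^{(\alpha,\beta,v)}\|^{-1}P_n^{(\alpha,\beta,v)}$ are orthonormal with respect to $W$.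
   Context: Fix real numbers $\alpha,\beta,v$ with $\alpha>-1$, $\beta>-1$ and $|\alpha-\beta|<|v|<\alpha+\beta+2$. Write $\kappa_{\pm v,\pm\beta}=\alpha\pm v\pm\beta$. Define $$\widetilde W(t)=\begin{pmatrix}\frac{v(\kappa_{v,\beta}+2)}{\kappa_{v,-\beta}}t^2-(\kappa_{v,\beta}+2)t+(\alpha+1) & (\alpha+\beta+2)t-(\alpha+1)\\ (\alpha+\beta+2)t-(\alpha+1) & -\frac{v(\kappa_{-v,\beta}+2)}{\kappa_{-v,-\beta}}t^2-(\kappa_{-v,\beta}+2)t+(\alpha+1)\end{pmatrix}$$ and $W(t)=t^\alpha(1-t)^\beta\widetilde W(t)$ on $(0,1)$. $\langle P,Q\rangle_W=\int_0^1P(t)W(t)Q(t)^*dt$. $(P_n^{(\alpha,\beta,v)})_{n\ge0}$ is the sequence of monic $2\times2$ matrix polynomials orthogonal with respect to $W$. $(x)_n$ is the Pochhammer symbol. *)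

theory Defs
  imports "HOL-Analysis.Analysis"
begin

type_synonym mat2 = "real^2^2"

definition mk2 :: "real \<Rightarrow> real \<Rightarrow> real \<Rightarrow> real \<Rightarrow> mat2" where
  "mk2 a b c d = (\<chi> i j. if i = 1 then (if j = 1 then a else b) else (if j = 1 then c else d))"

text \<open>kappa with signs: kap a s v t b = a + s*v + t*b, s,t in {1,-1}.\<close>
definition Wtilde :: "real \<Rightarrow> real \<Rightarrow> real \<Rightarrow> real \<Rightarrow> mat2" where
  "Wtilde \<alpha> \<beta> v t =
     mk2 (v * (\<alpha> + v + \<beta> + 2) / (\<alpha> + v - \<beta>) * t^2 - (\<alpha> + v + \<beta> + 2) * t + (\<alpha> + 1))
         ((\<alpha> + \<beta> + 2) * t - (\<alpha> + 1))
         ((\<alpha> + \<beta> + 2) * t - (\<alpha> + 1))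
         (- (v * (\<alpha> - v + \<beta> + 2) / (\<alpha> - v - \<beta>)) * t^2 - (\<alpha> - v + \<beta> + 2) * t + (\<alpha> + 1))"

definition Wmat :: "real \<Rightarrow> real \<Rightarrow> real \<Rightarrow> real \<Rightarrow> mat2" where
  "Wmat \<alpha> \<beta> v t = (t powr \<alpha> * (1 - t) powr \<beta>) *\<^sub>R Wtilde \<alpha> \<beta> v t"

text \<open>Matrix inner product <P,Q>_W = int_0^1 P(t) W(t) Q(t)^* dt (real matrices, so * = transpose).\<close>
definition ipW :: "(real \<Rightarrow> mat2) \<Rightarrow> (real \<Rightarrow> mat2) \<Rightarrow> (real \<Rightarrow> mat2) \<Rightarrow> mat2" where
  "ipW W P Q = integral {0..1} (\<lambda>t. P t ** W t ** transpose (Q t))"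

definition monic_matpoly :: "nat \<Rightarrow> (real \<Rightarrow> mat2) \<Rightarrow> bool" where
  "monic_matpoly n P \<longleftrightarrow> (\<exists>C :: nat \<Rightarrow> mat2. C n = mat 1 \<and>
      (\<forall>t. P t = (\<Sum>k\<le>n. (t ^ k) *\<^sub>R C k)))"

definition monic_OMP :: "(real \<Rightarrow> mat2) \<Rightarrow> (nat \<Rightarrow> real \<Rightarrow> mat2) \<Rightarrow> bool" where
  "monic_OMP W P \<longleftrightarrow> (\<forall>n. monic_matpoly n (P n)) \<and>
      (\<forall>n m. n \<noteq> m \<longrightarrow> ipW W (P n) (P m) = 0)"

definition cfac :: "real \<Rightarrow> real \<Rightarrow> real \<Rightarrow> nat \<Rightarrow> real" where
  "cfac \<alpha> \<beta> v n = fact n * v * Beta (\<alpha> + n + 2) (\<beta> + n + 2) / pochhammer (\<alpha> + \<beta> + n + 3) n"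

definition dg1 :: "real \<Rightarrow> real \<Rightarrow> real \<Rightarrow> nat \<Rightarrow> real" where
  "dg1 \<alpha> \<beta> v n = cfac \<alpha> \<beta> v n * ((\<alpha> + v + \<beta> + 2) * (\<alpha> - v + \<beta> + 2 * n + 4)
                          / ((\<alpha> + v - \<beta>) * (\<alpha> + v + \<beta> + 2 * n + 2)))"

definition dg2 :: "real \<Rightarrow> real \<Rightarrow> real \<Rightarrow> nat \<Rightarrow> real" where
  "dg2 \<alpha> \<beta> v n = cfac \<alpha> \<beta> v n * (- ((\<alpha> - v + \<beta> + 2) * (\<alpha> + v + \<beta> + 2 * n + 4)
                          / ((\<alpha> - v - \<beta>) * (\<alpha> - v + \<beta> + 2 * n + 2))))"

end

theory Submission
  imports Defs "HOL-Computational_Algebra.Polynomial"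
begin


definition wI :: "real \<Rightarrow> real \<Rightarrow> real poly \<Rightarrow> real" where
  "wI a b f = integral {0..1} (\<lambda>t. t powr a * (1-t) powr b * poly f t)"

lemma wt_monom_has_integral:
  assumes "a > -1" "b > -1"
  shows "((\<lambda>t. t powr a * (1-t) powr b * t ^ k) has_integral Beta (a + real k + 1) (b + 1)) {0..1}"
proof -
  have "((\<lambda>t. t powr (a + real k + 1 - 1) * (1 - t) powr (b + 1 - 1)) has_integral Beta (a + real k + 1) (b + 1)) {0..1}"
    by (rule has_integral_Beta_real) (use assms in auto)
  moreover have "t powr (a + real k + 1 - 1) * (1 - t) powr (b + 1 - 1) = t powr a * (1-t) powr b * t ^ k" if "t \<in> {0..1}" for t
  proof (cases "t = 0")
    case True then show ?thesis by simp
  next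
    case False
    with that have "t > 0" by auto
    then show ?thesis by (simp add: powr_add powr_realpow)
  qed
  ultimately show ?thesis using has_integral_cong by (smt (verit))
qed

definition wIval :: "real \<Rightarrow> real \<Rightarrow> real poly \<Rightarrow> real" where
  "wIval a b f = (\<Sum>i\<le>degree f. coeff f i * Beta (a + real i + 1) (b + 1))"

lemma wt_poly_has_integral:
  assumes "a > -1" "b > -1"
  shows "((\<lambda>t. t powr a * (1-t) powr b * poly f t) has_integral wIval a b f) {0..1}"
proof -
  have "((\<lambda>t. \<Sum>i\<le>degree f. coeff f i * (t powr a * (1-t) powr b * t ^ i)) has_integral wIval a b f) {0..1}"
    unfolding wIval_def
    by (intro has_integral_sum has_integral_mult_right wt_monom_has_integral assms) auto
  moreover have "(\<Sum>i\<le>degree f. coeff f i * (t powr a * (1-t) powr b * t ^ i)) = t powr a * (1-t) powr b * poly f t" for t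
    by (simp add: poly_altdef sum_distrib_left sum_distrib_right mult_ac)
  ultimately show ?thesis by simp
qed

lemma wI_eq: "a > -1 \<Longrightarrow> b > -1 \<Longrightarrow> wI a b f = wIval a b f"
  unfolding wI_def using wt_poly_has_integral by (rule integral_unique)

lemma wt_integrable:
  fixes f :: "real poly" and a b :: real
  assumes "a > -1" "b > -1" shows "(\<lambda>t. t powr a * (1-t) powr b * poly f t) integrable_on {0..1}"
  using wt_poly_has_integral[OF assms] unfolding integrable_on_def by blast

lemma wI_add:
  assumes "a > -1" "b > -1" shows "wI a b (f + g) = wI a b f + wI a b g"
proof -
  have "wI a b (f + g) = integral {0..1} (\<lambda>t. t powr a * (1-t) powr b * poly f t + t powr a * (1-t) powr b * poly g t)"
    unfolding wI_def by (simp add: algebra_simps)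
  also have "\<dots> = wI a b f + wI a b g"
    unfolding wI_def by (rule integral_add) (use wt_integrable[OF assms] in auto)
  finally show ?thesis .
qed

lemma wI_smult: "a > -1 \<Longrightarrow> b > -1 \<Longrightarrow> wI a b (smult c f) = c * wI a b f"
  unfolding wI_def
  by (subst integral_mult_right[symmetric]) (simp add: mult_ac)

lemma wI_0[simp]: "wI a b 0 = 0"
  unfolding wI_def by simp

lemma wI_sum: "a > -1 \<Longrightarrow> b > -1 \<Longrightarrow> wI a b (\<Sum>i\<in>S. f i) = (\<Sum>i\<in>S. wI a b (f i))"
  by (induction S rule: infinite_finite_induct) (auto simp: wI_add)

lemma wI_minus: "a > -1 \<Longrightarrow> b > -1 \<Longrightarrow> wI a b (- f) = - wI a b f"
  using wI_smult[of a b "-1" f] by simp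

lemma wI_diff: "a > -1 \<Longrightarrow> b > -1 \<Longrightarrow> wI a b (f - g) = wI a b f - wI a b g"
  using wI_add[of a b f "-g"] wI_minus[of a b g] by simp



definition Phi :: "real \<Rightarrow> real \<Rightarrow> real poly \<Rightarrow> real poly" where
  "Phi a b g = [:a+1, -(a+b+2):] * g + [:0,1,-1:] * pderiv g"

lemma ibp:
  fixes g h :: "real poly" and a b :: real
  assumes a: "a > -1" and b: "b > -1"
  shows "wI a b (Phi a b g * h) = - wI (a+1) (b+1) (g * pderiv h)"
proof -
  define F where "F t = t powr (a+1) * (1-t) powr (b+1) * poly (g*h) t" for t
  define f1 where "f1 t = t powr a * (1-t) powr b * poly (Phi a b g * h) t" for t
  define f2 where "f2 t = t powr (a+1) * (1-t) powr (b+1) * poly (g * pderiv h) t" for t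
  have cont: "continuous_on {0..1} F"
    unfolding F_def using a b
    by (intro continuous_intros continuous_on_powr') auto
  have der: "(F has_vector_derivative (f1 t + f2 t)) (at t)" if t: "t \<in> {0<..<1}" for t
  proof -
    from t have t0: "t > 0" and t1: "1 - t > 0" by auto
    have "(F has_real_derivative
        ((a+1) * t powr (a+1-1) * (1-t) powr (b+1) * poly (g*h) t
         + t powr (a+1) * ((b+1) * (1-t) powr (b+1-1) * (-1)) * poly (g*h) t
         + t powr (a+1) * (1-t) powr (b+1) * poly (pderiv (g*h)) t)) (at t)"
    proof -
      have d1: "((\<lambda>t. t powr (a+1)) has_real_derivative (a+1) * t powr (a+1-1)) (at t)"
        by (rule has_real_derivative_powr[OF t0])
      have d2: "((\<lambda>t. (1-t) powr (b+1)) has_real_derivative (b+1) * (1-t) powr (b+1-1) * (-1)) (at t)"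
        using t1 by (auto intro!: derivative_eq_intros)
      have d3: "(poly (g*h) has_real_derivative poly (pderiv (g*h)) t) (at t)" by (rule poly_DERIV)
      show ?thesis unfolding F_def
        using DERIV_mult[OF DERIV_mult[OF d1 d2] d3] by (simp add: algebra_simps)
    qed
    moreover have "((a+1) * t powr (a+1-1) * (1-t) powr (b+1) * poly (g*h) t
         + t powr (a+1) * ((b+1) * (1-t) powr (b+1-1) * (-1)) * poly (g*h) t
         + t powr (a+1) * (1-t) powr (b+1) * poly (pderiv (g*h)) t) = f1 t + f2 t"
    proof -
      have e1: "t powr (a+1) = t * t powr a" using t0 by (simp add: powr_add)
      have e2: "(1-t) powr (b+1) = (1-t) * (1-t) powr b" using t1 by (simp add: powr_add)
      show ?thesis
        unfolding f1_def f2_def e1 e2 Phi_def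
        by (simp add: pderiv_mult algebra_simps)
    qed
    ultimately show ?thesis by (simp add: has_real_derivative_iff_has_vector_derivative)
  qed
  have "((\<lambda>t. f1 t + f2 t) has_integral (F 1 - F 0)) {0..1}"
    by (rule fundamental_theorem_of_calculus_interior[OF _ cont der]) auto
  moreover have "F 1 - F 0 = 0" unfolding F_def using a b by simp
  ultimately have I: "((\<lambda>t. f1 t + f2 t) has_integral 0) {0..1}" by simp
  have i2: "f2 integrable_on {0..1}" unfolding f2_def by (rule wt_integrable) (use a b in auto)
  have "integral {0..1} f1 = integral {0..1} (\<lambda>t. (f1 t + f2 t) - f2 t)" by simp
  also have "\<dots> = integral {0..1} (\<lambda>t. f1 t + f2 t) - integral {0..1} f2"
    by (rule integral_diff) (use I i2 in auto)
  also have "\<dots> = - integral {0..1} f2" using I by (simp add: integral_unique)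
  finally show ?thesis unfolding wI_def f1_def f2_def .
qed



fun Dop :: "real \<Rightarrow> real \<Rightarrow> nat \<Rightarrow> real poly \<Rightarrow> real poly" where
  "Dop a b 0 g = g"
| "Dop a b (Suc m) g = Phi a b (Dop (a+1) (b+1) m g)"

lemma rodrigues:
  fixes a b :: real
  assumes "a > -1" "b > -1"
  shows "wI a b (Dop a b m g * h) = (-1)^m * wI (a + real m) (b + real m) (g * (pderiv^^m) h)"
  using assms
proof (induction m arbitrary: a b h)
  case 0 then show ?case by simp
next
  case (Suc m)
  have "wI a b (Dop a b (Suc m) g * h) = - wI (a+1) (b+1) (Dop (a+1) (b+1) m g * pderiv h)"
    using Suc.prems by (simp add: ibp)
  also have "\<dots> = - ((-1)^m * wI (a + 1 + real m) (b + 1 + real m) (g * (pderiv^^m) (pderiv h)))"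
    using Suc.prems by (subst Suc.IH) auto
  also have "(pderiv^^m) (pderiv h) = (pderiv^^(Suc m)) h" by (simp add: funpow_Suc_right del: funpow.simps)
  finally show ?case by (simp add: algebra_simps)
qed

lemma Phi_add: "Phi a b (f + g) = Phi a b f + Phi a b g"
  unfolding Phi_def pderiv_add distrib_left by (simp only: add_ac)

lemma Phi_0[simp]: "Phi a b 0 = 0" by (simp add: Phi_def)

lemma Phi_sum: "Phi a b (\<Sum>i\<in>S. f i) = (\<Sum>i\<in>S. Phi a b (f i))"
  by (induction S rule: infinite_finite_induct) (auto simp: Phi_add)

lemma Phi_mult: "Phi a b (r * x) = r * Phi a b x + [:0,1,-1:] * pderiv r * x"
  unfolding Phi_def pderiv_mult distrib_left by (simp only: add_ac mult_ac)

lemma higher_pderiv_deg: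
  fixes p :: "real poly"
  assumes "degree p \<le> n"
  shows "(pderiv^^n) p = [: fact n * coeff p n :]"
  using assms
proof (induction n arbitrary: p)
  case 0
  then show ?case by (auto elim!: degree_eq_zeroE)
next
  case (Suc n)
  have "degree (pderiv p) \<le> n" using Suc.prems by (simp add: degree_pderiv)
  then have "(pderiv^^n) (pderiv p) = [: fact n * coeff (pderiv p) n :]" by (rule Suc.IH)
  then show ?case by (simp add: funpow_Suc_right coeff_pderiv del: funpow.simps)
qed

lemma higher_pderiv_small:
  fixes p :: "real poly"
  assumes "\<forall>k\<ge>n. coeff p k = 0"
  shows "(pderiv^^n) p = 0"
proof (cases n)
  case 0 then show ?thesis using assms by (simp add: poly_eq_iff)
next
  case (Suc m)
  have "degree p \<le> n"
    using assms by (intro degree_le) auto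
  then show ?thesis using higher_pderiv_deg[of p n] assms by simp
qed



type_synonym pm = "real poly ^2^2"

lemma two_ne_one[simp]: "(2::2) \<noteq> 1" "(1::2) \<noteq> 2" by auto

definition mkP :: "real poly \<Rightarrow> real poly \<Rightarrow> real poly \<Rightarrow> real poly \<Rightarrow> pm" where
  "mkP a b c d = (\<chi> i j. if i = 1 then (if j = 1 then a else b) else (if j = 1 then c else d))"

lemma mkP_nth[simp]: "mkP a b c d $ 1 $ 1 = a" "mkP a b c d $ 1 $ 2 = b"
  "mkP a b c d $ 2 $ 1 = c" "mkP a b c d $ 2 $ 2 = d"
  by (simp_all add: mkP_def)

lemma mk2_nth[simp]: "mk2 a b c d $ 1 $ 1 = a" "mk2 a b c d $ 1 $ 2 = b"
  "mk2 a b c d $ 2 $ 1 = c" "mk2 a b c d $ 2 $ 2 = d"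
  by (simp_all add: mk2_def)

lemma vec2_eq: "(A::'a^2^2) = B \<longleftrightarrow> A$1$1 = B$1$1 \<and> A$1$2 = B$1$2 \<and> A$2$1 = B$2$1 \<and> A$2$2 = B$2$2"
  by (auto simp: vec_eq_iff forall_2)

lemma mkP_eta: "M = mkP (M$1$1) (M$1$2) (M$2$1) (M$2$2)"
  by (simp add: vec2_eq)

lemma mk2_eta: "M = mk2 (M$1$1) (M$1$2) (M$2$1) (M$2$2)"
  by (simp add: vec2_eq)

lemma mkP_mult: "mkP a b c d ** mkP e f g h = mkP (a*e+b*g) (a*f+b*h) (c*e+d*g) (c*f+d*h)"
  by (simp add: vec2_eq matrix_matrix_mult_def sum_2)

lemma mk2_mult: "mk2 a b c d ** mk2 e f g h = mk2 (a*e+b*g) (a*f+b*h) (c*e+d*g) (c*f+d*h)"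
  by (simp add: vec2_eq matrix_matrix_mult_def sum_2)

lemma mkP_transpose: "transpose (mkP a b c d) = mkP a c b d"
  by (simp add: vec2_eq transpose_def)

lemma mk2_transpose: "transpose (mk2 a b c d) = mk2 a c b d"
  by (simp add: vec2_eq transpose_def)

lemma mkP_add: "mkP a b c d + mkP e f g h = mkP (a+e) (b+f) (c+g) (d+h)"
  by (simp add: vec2_eq)

lemma mk2_add: "mk2 a b c d + mk2 e f g h = mk2 (a+e) (b+f) (c+g) (d+h)"
  by (simp add: vec2_eq)

lemma mk2_zero: "(0::real^2^2) = mk2 0 0 0 0" by (simp add: vec2_eq)
lemma mk2_one: "(mat 1::real^2^2) = mk2 1 0 0 1" by (simp add: vec2_eq mat_def)
lemma mkP_one: "(mat 1::pm) = mkP 1 0 0 1" by (simp add: vec2_eq mat_def)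

definition ev :: "pm \<Rightarrow> real \<Rightarrow> real^2^2" where
  "ev M t = (\<chi> i j. poly (M$i$j) t)"

lemma ev_mkP: "ev (mkP a b c d) t = mk2 (poly a t) (poly b t) (poly c t) (poly d t)"
  by (simp add: vec2_eq ev_def)

lemma ev_mult: "ev (A ** B) t = ev A t ** ev B t"
  by (simp add: vec_eq_iff ev_def matrix_matrix_mult_def poly_sum)

lemma ev_transpose: "ev (transpose A) t = transpose (ev A t)"
  by (simp add: vec_eq_iff ev_def transpose_def)

definition cm :: "real^2^2 \<Rightarrow> pm" where
  "cm C = (\<chi> i j. [:C$i$j:])"

lemma ev_cm: "ev (cm C) t = C" by (simp add: vec_eq_iff ev_def cm_def)

definition IM :: "real \<Rightarrow> real \<Rightarrow> pm \<Rightarrow> real^2^2" where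
  "IM a b M = (\<chi> i j. wI a b (M$i$j))"

lemma IM_mkP: "IM a b (mkP p q r s) = mk2 (wI a b p) (wI a b q) (wI a b r) (wI a b s)"
  by (simp add: vec2_eq IM_def)

lemma IM_add: "a > -1 \<Longrightarrow> b > -1 \<Longrightarrow> IM a b (A + B) = IM a b A + IM a b B"
  by (simp add: vec_eq_iff IM_def wI_add)

lemma IM_diff: "a > -1 \<Longrightarrow> b > -1 \<Longrightarrow> IM a b (A - B) = IM a b A - IM a b B"
  by (simp add: vec_eq_iff IM_def wI_diff)

lemma IM_0[simp]: "IM a b 0 = 0" by (simp add: vec_eq_iff IM_def)

lemma const_mult_smult: "[:c:] * p = smult c p" by simp

lemma IM_cm_left: "a > -1 \<Longrightarrow> b > -1 \<Longrightarrow> IM a b (cm C ** M) = C ** IM a b M"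
  by (simp add: vec_eq_iff IM_def cm_def matrix_matrix_mult_def wI_sum wI_smult)

lemma IM_cm_right: "a > -1 \<Longrightarrow> b > -1 \<Longrightarrow> IM a b (M ** cm C) = IM a b M ** C"
  by (simp add: vec_eq_iff IM_def cm_def matrix_matrix_mult_def wI_sum wI_smult mult.commute[of _ "[:_:]"] mult.commute[of _ "C$_$_"])

lemma cm_mult: "cm (A ** B) = cm A ** cm B"
  by (simp add: vec_eq_iff cm_def matrix_matrix_mult_def sum_2 mult.commute)

lemma transpose_cm: "transpose (cm C) = cm (transpose C)"
  by (simp add: vec_eq_iff cm_def transpose_def)



lemma mk2_decomp: "mk2 x y z u = x *\<^sub>R mk2 1 0 0 0 + y *\<^sub>R mk2 0 1 0 0 + z *\<^sub>R mk2 0 0 1 0 + u *\<^sub>R mk2 0 0 0 1"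
  by (simp add: vec2_eq)

lemma ev_has_integral:
  assumes "a > -1" "b > -1"
  shows "((\<lambda>t. (t powr a * (1-t) powr b) *\<^sub>R ev M t) has_integral IM a b M) {0..1}"
proof -
  let ?w = "\<lambda>t. t powr a * (1-t) powr b"
  have e: "(?w t) *\<^sub>R ev M t =
      (?w t * poly (M$1$1) t) *\<^sub>R mk2 1 0 0 0 + (?w t * poly (M$1$2) t) *\<^sub>R mk2 0 1 0 0
    + (?w t * poly (M$2$1) t) *\<^sub>R mk2 0 0 1 0 + (?w t * poly (M$2$2) t) *\<^sub>R mk2 0 0 0 1" for t
    by (simp add: vec2_eq ev_def)
  have i: "IM a b M = wI a b (M$1$1) *\<^sub>R mk2 1 0 0 0 + wI a b (M$1$2) *\<^sub>R mk2 0 1 0 0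
    + wI a b (M$2$1) *\<^sub>R mk2 0 0 1 0 + wI a b (M$2$2) *\<^sub>R mk2 0 0 0 1"
    by (simp add: vec2_eq IM_def)
  have h: "((\<lambda>t. ?w t * poly p t) has_integral wI a b p) {0..1}" for p
    using wt_poly_has_integral[OF assms, of p] wI_eq[OF assms, of p] by simp
  show ?thesis unfolding e i
    by (intro has_integral_add has_integral_scaleR_left h)
qed

definition WP :: "real \<Rightarrow> real \<Rightarrow> real \<Rightarrow> pm" where
  "WP a b v = mkP [:a+1, -(a+v+b+2), v * (a+v+b+2)/(a+v-b):] [:-(a+1), a+b+2:] [:-(a+1), a+b+2:]
                  [:a+1, -(a-v+b+2), -(v * (a-v+b+2)/(a-v-b)):]"

lemma ev_WP: "ev (WP a b v) t = Wtilde a b v t"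
  by (simp add: WP_def ev_mkP Wtilde_def vec2_eq power2_eq_square algebra_simps)

lemma transpose_WP: "transpose (WP a b v) = WP a b v"
  by (simp add: WP_def mkP_transpose)

lemma matrix_scaleR_mid: "(A::real^2^2) ** (c *\<^sub>R B) = c *\<^sub>R (A ** B)"
  by (simp add: vec_eq_iff matrix_matrix_mult_def sum_distrib_left mult_ac)

lemma matrix_scaleR_left': "(c *\<^sub>R A::real^2^2) ** B = c *\<^sub>R (A ** B)"
  by (simp add: vec_eq_iff matrix_matrix_mult_def sum_distrib_left mult_ac)

lemma ipW_ev:
  assumes "\<alpha> > -1" "\<beta> > -1"
  shows "ipW (Wmat \<alpha> \<beta> v) (ev X) (ev Y) = IM \<alpha> \<beta> (X ** WP \<alpha> \<beta> v ** transpose Y)"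
proof -
  have "ev X t ** Wmat \<alpha> \<beta> v t ** transpose (ev Y t)
        = (t powr \<alpha> * (1-t) powr \<beta>) *\<^sub>R ev (X ** WP \<alpha> \<beta> v ** transpose Y) t" for t
    by (simp add: Wmat_def ev_mult ev_transpose ev_WP matrix_scaleR_mid matrix_scaleR_left')
  then show ?thesis
    unfolding ipW_def using ev_has_integral[OF assms] by (simp add: integral_unique)
qed



definition PhiM :: "real \<Rightarrow> real \<Rightarrow> pm \<Rightarrow> pm" where
  "PhiM a b M = (\<chi> i j. Phi a b (M$i$j))"

lemma PhiM_mkP: "PhiM a b (mkP p q r s) = mkP (Phi a b p) (Phi a b q) (Phi a b r) (Phi a b s)"
  by (simp add: vec2_eq PhiM_def)

definition TP :: "real \<Rightarrow> real \<Rightarrow> real \<Rightarrow> pm" where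
  "TP a b v = (let K = a+b+v+2; Kb = a+b-v+2; p = a+v-b; pb = a-v-b;
     N11 = -a*a* v+a*a-a*b* v-a* v * v-5*a* v+4*a-b*b-3*b* v-4*b-2* v * v-8* v;
     N22 = -a*a* v-a*a-a*b* v+a* v * v-5*a* v-4*a+b*b-3*b* v+4*b+2* v * v-8* v
   in mkP [:N11/(-v *K), -(a+b+4)*(K+2)/K:] [:-(a+b+4)*pb/(v *K):]
          [:(a+b+4)*p/(v *Kb):] [:N22/(-v *Kb), -(a+b+4)*(Kb+2)/Kb:])"

definition SP :: "real \<Rightarrow> real \<Rightarrow> real \<Rightarrow> pm" where
  "SP a b v = (let K = a+b+v+2; Kb = a+b-v+2; p = a+v-b; pb = a-v-b
   in mkP [:p*pb/(-v *K*Kb), (K+2)/K, -(K+2)/K:] [:p*pb/(-v *K*Kb), 2*pb/(K*Kb):]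
          [:p*pb/(v *K*Kb), 2*p/(K*Kb):] [:p*pb/(v *K*Kb), (Kb+2)/Kb, -(Kb+2)/Kb:])"

definition ttM :: "pm \<Rightarrow> pm" where
  "ttM M = (\<chi> i j. [:0,1,-1:] * M$i$j)"

lemma ttM_mkP: "ttM (mkP p q r s) = mkP ([:0,1,-1:] * p) ([:0,1,-1:] * q) ([:0,1,-1:] * r) ([:0,1,-1:] * s)"
  by (simp add: vec2_eq ttM_def)

lemma poly_eqI': "(\<And>t. poly p t = poly q t) \<Longrightarrow> (p::real poly) = q"
  by (simp add: poly_eq_poly_eq_iff[symmetric] fun_eq_iff)

lemma TW:
  assumes "v \<noteq> 0" "a+b+v+2 \<noteq> 0" "a+b-v+2 \<noteq> 0" "a+v-b \<noteq> 0" "a-v-b \<noteq> 0"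
  shows "TP a b v ** WP a b v = PhiM a b (WP (a+1) (b+1) v)"
  unfolding TP_def WP_def Let_def mkP_mult PhiM_mkP
  using assms apply (simp add: vec2_eq Phi_def pderiv_pCons)
  apply (simp add: divide_simps)
  apply (simp add: algebra_simps)
  done

lemma SW:
  assumes "v \<noteq> 0" "a+b+v+2 \<noteq> 0" "a+b-v+2 \<noteq> 0" "a+v-b \<noteq> 0" "a-v-b \<noteq> 0"
  shows "SP a b v ** WP a b v = ttM (WP (a+1) (b+1) v)"
  unfolding SP_def WP_def Let_def mkP_mult ttM_mkP
  using assms apply (simp add: vec2_eq)
  apply (simp add: divide_simps)
  apply (simp add: algebra_simps)
  done



lemma matrix_add_rdistrib': "((A::'a::semiring_1^'n^'m) + B) ** C = A ** C + B ** C"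
  by (simp add: vec_eq_iff matrix_matrix_mult_def sum.distrib distrib_right)

definition pdM :: "pm \<Rightarrow> pm" where
  "pdM M = (\<chi> i j. pderiv (M$i$j))"

definition DM :: "real \<Rightarrow> real \<Rightarrow> nat \<Rightarrow> pm \<Rightarrow> pm" where
  "DM a b n M = (\<chi> i j. Dop a b n (M$i$j))"

lemma DM_Suc: "DM a b (Suc m) M = PhiM a b (DM (a+1) (b+1) m M)"
  by (simp add: vec_eq_iff DM_def PhiM_def)

lemma DM_0: "DM a b 0 M = M"
  by (simp add: vec_eq_iff DM_def)

lemma PhiM_prod: "PhiM a b (R ** X) = R ** PhiM a b X + pdM R ** ttM X"
proof -
  have h: "[:0,1,-1:] * pderiv r * x = pderiv r * ([:0,1,-1:] * x)" for r x :: "real poly"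
    by (simp only: mult_ac)
  have "Phi a b (\<Sum>k\<in>UNIV. R$i$k * X$k$j) = (\<Sum>k\<in>UNIV. R$i$k * Phi a b (X$k$j)) + (\<Sum>k\<in>UNIV. pderiv (R$i$k) * ([:0,1,-1:] * X$k$j))"
    for i j
    unfolding Phi_sum Phi_mult h by (rule sum.distrib)
  then show ?thesis
    by (simp add: vec_eq_iff PhiM_def pdM_def ttM_def matrix_matrix_mult_def del: mult_pCons_left mult_pCons_right)
qed

fun RR :: "real \<Rightarrow> real \<Rightarrow> real \<Rightarrow> nat \<Rightarrow> pm" where
  "RR a b v 0 = mat 1"
| "RR a b v (Suc m) = RR (a+1) (b+1) v m ** TP a b v + pdM (RR (a+1) (b+1) v m) ** SP a b v"

lemma RW:
  assumes "v \<noteq> 0" "a+b+v+2 > 0" "a+b-v+2 > 0" "a+v-b \<noteq> 0" "a-v-b \<noteq> 0"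
  shows "RR a b v m ** WP a b v = DM a b m (WP (a + real m) (b + real m) v)"
  using assms
proof (induction m arbitrary: a b)
  case 0
  then show ?case by (simp add: DM_0)
next
  case (Suc m)
  let ?R = "RR (a+1) (b+1) v m"
  have IH: "?R ** WP (a+1) (b+1) v = DM (a+1) (b+1) m (WP (a + 1 + real m) (b + 1 + real m) v)"
    using Suc.prems by (intro Suc.IH) auto
  have nz: "v \<noteq> 0" "a+b+v+2 \<noteq> 0" "a+b-v+2 \<noteq> 0" "a+v-b \<noteq> 0" "a-v-b \<noteq> 0"
    using Suc.prems by auto
  have "RR a b v (Suc m) ** WP a b v = ?R ** (TP a b v ** WP a b v) + pdM ?R ** (SP a b v ** WP a b v)"
    by (simp add: matrix_add_rdistrib' matrix_mul_assoc)
  also have "\<dots> = ?R ** PhiM a b (WP (a+1) (b+1) v) + pdM ?R ** ttM (WP (a+1) (b+1) v)"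
    by (simp add: TW[OF nz] SW[OF nz])
  also have "\<dots> = PhiM a b (?R ** WP (a+1) (b+1) v)" by (simp add: PhiM_prod)
  also have "\<dots> = DM a b (Suc m) (WP (a + real (Suc m)) (b + real (Suc m)) v)"
    unfolding IH DM_Suc by (simp add: add_ac)
  finally show ?case .
qed



lemma coeff_mult_bound:
  fixes p q :: "real poly"
  assumes "degree p \<le> m" "degree q \<le> d"
  shows "coeff (p*q) (m+d) = coeff p m * coeff q d"
proof (cases "degree p = m \<and> degree q = d")
  case True
  then show ?thesis using coeff_mult_degree_sum[of p q] by simp
next
  case False
  then have "coeff p m = 0 \<or> coeff q d = 0"
    using assms by (metis coeff_eq_0 le_neq_implies_less)
  moreover have "degree (p*q) < m + d \<or> p * q = 0 \<or> (p = 0 \<or> q = 0)"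
  proof -
    have "degree (p*q) \<le> degree p + degree q" by (rule degree_mult_le)
    moreover have "degree p + degree q < m + d \<or> p = 0 \<or> q = 0"
      using False assms by (metis add_le_less_mono add_less_le_mono le_neq_implies_less)
    ultimately show ?thesis by auto
  qed
  ultimately show ?thesis
    by (metis coeff_eq_0 coeff_0 mult_zero_left mult_zero_right mult_eq_0_iff)
qed

lemma degree_pderiv_mult:
  fixes p q :: "real poly"
  assumes "degree p \<le> m" "degree q \<le> 2"
  shows "degree (pderiv p * q) \<le> m + 1"
proof (cases m)
  case 0
  then have "pderiv p = 0" using assms by (simp add: pderiv_eq_0_iff)
  then show ?thesis by simp
next
  case (Suc k)
  have "degree (pderiv p * q) \<le> degree (pderiv p) + degree q" by (rule degree_mult_le)
  also have "\<dots> \<le> k + 2" using assms Suc by (simp add: degree_pderiv)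
  finally show ?thesis using Suc by simp
qed

lemma coeff_pderiv_mult:
  fixes p q :: "real poly"
  assumes "degree p \<le> m" "degree q \<le> 2"
  shows "coeff (pderiv p * q) (m+1) = of_nat m * coeff p m * coeff q 2"
proof (cases m)
  case 0
  then have "pderiv p = 0" using assms by (simp add: pderiv_eq_0_iff)
  then show ?thesis using 0 by simp
next
  case (Suc k)
  have "degree (pderiv p) \<le> k" using assms Suc by (simp add: degree_pderiv)
  then have "coeff (pderiv p * q) (k+2) = coeff (pderiv p) k * coeff q 2"
    using assms by (intro coeff_mult_bound)
  then show ?thesis using Suc by (simp add: coeff_pderiv mult_ac)
qed

lemma degree_mult_bound: "degree (p::real poly) \<le> m \<Longrightarrow> degree q \<le> d \<Longrightarrow> degree (p*q) \<le> m + d"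
  by (meson add_le_mono degree_mult_le order_trans)

definition dB :: "pm \<Rightarrow> nat \<Rightarrow> bool" where
  "dB M n \<longleftrightarrow> (\<forall>i j. degree (M$i$j) \<le> n)"

definition lc :: "pm \<Rightarrow> nat \<Rightarrow> real^2^2" where
  "lc M n = (\<chi> i j. coeff (M$i$j) n)"

lemma dB2: "dB M n \<longleftrightarrow> degree (M$1$1) \<le> n \<and> degree (M$1$2) \<le> n \<and> degree (M$2$1) \<le> n \<and> degree (M$2$2) \<le> n"
  by (auto simp: dB_def forall_2)

lemma lc_nth[simp]: "lc M n $ i $ j = coeff (M$i$j) n" by (simp add: lc_def)

lemma lead_step:
  assumes R: "dB R m" "lc R m = mk2 l1 0 0 l2"
    and T: "dB T 1" and S: "dB S 2"
    and T0: "coeff (T$1$2) 1 = 0" "coeff (T$2$1) 1 = 0"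
    and S0: "coeff (S$1$2) 2 = 0" "coeff (S$2$1) 2 = 0"
  shows "dB (R ** T + pdM R ** S) (m+1)"
    "lc (R ** T + pdM R ** S) (m+1) =
       mk2 (l1 * (coeff (T$1$1) 1 + of_nat m * coeff (S$1$1) 2)) 0 0
           (l2 * (coeff (T$2$2) 1 + of_nat m * coeff (S$2$2) 2))"
proof -
  have dR: "degree (R$i$j) \<le> m" for i j using R(1) by (simp add: dB_def)
  have dT: "degree (T$i$j) \<le> 1" for i j using T by (simp add: dB_def)
  have dS: "degree (S$i$j) \<le> 2" for i j using S by (simp add: dB_def)
  have cR: "coeff (R$1$1) m = l1" "coeff (R$1$2) m = 0" "coeff (R$2$1) m = 0" "coeff (R$2$2) m = l2"
    using R(2) by (simp_all add: vec2_eq)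
  have e: "(R ** T + pdM R ** S) $ i $ j = R$i$1 * T$1$j + R$i$2 * T$2$j + (pderiv (R$i$1) * S$1$j + pderiv (R$i$2) * S$2$j)" for i j
    by (simp add: matrix_matrix_mult_def pdM_def sum_2)
  have d: "degree ((R ** T + pdM R ** S) $ i $ j) \<le> m + 1" for i j
    unfolding e
    by (intro degree_add_le degree_mult_bound degree_pderiv_mult dR dT dS)
  have c: "coeff ((R ** T + pdM R ** S) $ i $ j) (m+1) =
     coeff (R$i$1) m * coeff (T$1$j) 1 + coeff (R$i$2) m * coeff (T$2$j) 1
     + (of_nat m * coeff (R$i$1) m * coeff (S$1$j) 2 + of_nat m * coeff (R$i$2) m * coeff (S$2$j) 2)" for i j
    unfolding e coeff_add
    by (simp only: coeff_mult_bound[OF dR dT] coeff_pderiv_mult[OF dR dS])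
  show "dB (R ** T + pdM R ** S) (m+1)" using d by (simp add: dB_def)
  show "lc (R ** T + pdM R ** S) (m+1) =
       mk2 (l1 * (coeff (T$1$1) 1 + of_nat m * coeff (S$1$1) 2)) 0 0
           (l2 * (coeff (T$2$2) 1 + of_nat m * coeff (S$2$2) 2))"
    unfolding vec2_eq lc_nth c mk2_nth using T0 S0 by (simp add: cR algebra_simps)
qed



definition lam1 :: "real \<Rightarrow> real \<Rightarrow> real \<Rightarrow> nat \<Rightarrow> real" where
  "lam1 a b v m = (-1)^m * (a+b+v+2+2*real m)/(a+b+v+2) * pochhammer (a+b+real m+3) m"
definition lam2 :: "real \<Rightarrow> real \<Rightarrow> real \<Rightarrow> nat \<Rightarrow> real" where
  "lam2 a b v m = (-1)^m * (a+b-v+2+2*real m)/(a+b-v+2) * pochhammer (a+b+real m+3) m"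

lemma TP_facts:
  "dB (TP a b v) 1" "coeff (TP a b v $1$2) 1 = 0" "coeff (TP a b v $2$1) 1 = 0"
  "coeff (TP a b v $1$1) 1 = -(a+b+4)*(a+b+v+2+2)/(a+b+v+2)"
  "coeff (TP a b v $2$2) 1 = -(a+b+4)*(a+b-v+2+2)/(a+b-v+2)"
  by (simp_all add: TP_def Let_def dB2)

lemma SP_facts:
  "dB (SP a b v) 2" "coeff (SP a b v $1$2) 2 = 0" "coeff (SP a b v $2$1) 2 = 0"
  "coeff (SP a b v $1$1) 2 = -(a+b+v+2+2)/(a+b+v+2)"
  "coeff (SP a b v $2$2) 2 = -(a+b-v+2+2)/(a+b-v+2)"
  by (simp_all add: SP_def Let_def dB2 numeral_2_eq_2)

lemma RR_lead:
  assumes "a+b+v+2 > 0" "a+b-v+2 > 0"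
  shows "dB (RR a b v m) m \<and> lc (RR a b v m) m = mk2 (lam1 a b v m) 0 0 (lam2 a b v m)"
  using assms
proof (induction m arbitrary: a b)
  case 0
  then show ?case by (simp add: dB2 vec2_eq mat_def lam1_def lam2_def)
next
  case (Suc m)
  have IH: "dB (RR (a+1) (b+1) v m) m \<and> lc (RR (a+1) (b+1) v m) m = mk2 (lam1 (a+1) (b+1) v m) 0 0 (lam2 (a+1) (b+1) v m)"
    using Suc.prems by (intro Suc.IH) auto
  note L = lead_step[OF IH[THEN conjunct1] IH[THEN conjunct2] TP_facts(1) SP_facts(1) TP_facts(2,3) SP_facts(2,3)]
  have p: "pochhammer (a + b + real (Suc m) + 3) (Suc m) = (a+b+real m+4) * pochhammer (a + 1 + (b + 1) + real m + 3) m"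
    by (simp add: pochhammer_rec algebra_simps)
  have alg0: "((-1)^m * (L + 2*real m)/L * P) * (- c * L/K + real m * (-L/K))
      = (-1)^(Suc m) * (L + 2*real m)/K * ((c + real m) * P)" if "K \<noteq> 0" "L \<noteq> 0" for K L c P :: real
    using that by (simp add: field_simps)
  have alg: "((-1)^m * (K + 2 + 2*real m)/(K+2) * P) * (- c * (K+2)/K + real m * (-(K+2)/K))
      = (-1)^(Suc m) * (K + 2*real (Suc m))/K * ((c + real m) * P)" if "K > 0" for K c P :: real
    using alg0[where K=K and L="K+2" and c=c and P=P] that by (simp add: algebra_simps)
  have q1: "a+1+(b+1)+v+2 = (a+b+v+2)+2" "a+1+(b+1)-v+2 = (a+b-v+2)+2" by simp_all
  have q4: "a + b + real m + 4 = (a+b+4) + real m" by simp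
  have e1: "lam1 (a+1) (b+1) v m * (coeff (TP a b v $1$1) 1 + real m * coeff (SP a b v $1$1) 2) = lam1 a b v (Suc m)"
    unfolding TP_facts SP_facts lam1_def p q1 q4
    by (rule alg) (use Suc.prems in simp)
  have e2: "lam2 (a+1) (b+1) v m * (coeff (TP a b v $2$2) 1 + real m * coeff (SP a b v $2$2) 2) = lam2 a b v (Suc m)"
    unfolding TP_facts SP_facts lam2_def p q1 q4
    by (rule alg) (use Suc.prems in simp)
  show ?case using L e1 e2 by simp
qed



definition pdMn :: "nat \<Rightarrow> pm \<Rightarrow> pm" where
  "pdMn n M = (\<chi> i j. (pderiv^^n) (M$i$j))"

lemma IM_DM_pair:
  assumes a: "a > -1" and b: "b > -1"
  shows "IM a b (X ** transpose (DM a b n Psi)) = ((-1)^n) *\<^sub>R IM (a + real n) (b + real n) (pdMn n X ** transpose Psi)"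
proof -
  have a': "a + real n > -1" and b': "b + real n > -1" using a b by auto
  have "wI a b (\<Sum>k\<in>UNIV. X$i$k * Dop a b n (Psi$j$k)) =
        (-1)^n * wI (a + real n) (b + real n) (\<Sum>k\<in>UNIV. (pderiv^^n) (X$i$k) * Psi$j$k)" for i j
  proof -
    have "wI a b (\<Sum>k\<in>UNIV. X$i$k * Dop a b n (Psi$j$k)) = (\<Sum>k\<in>UNIV. wI a b (Dop a b n (Psi$j$k) * X$i$k))"
      by (simp add: wI_sum[OF a b] mult.commute)
    also have "\<dots> = (\<Sum>k\<in>UNIV. (-1)^n * wI (a + real n) (b + real n) (Psi$j$k * (pderiv^^n) (X$i$k)))"
      by (simp add: rodrigues[OF a b])
    also have "\<dots> = (-1)^n * wI (a + real n) (b + real n) (\<Sum>k\<in>UNIV. (pderiv^^n) (X$i$k) * Psi$j$k)"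
      by (simp add: wI_sum[OF a' b'] sum_distrib_left mult.commute)
    finally show ?thesis .
  qed
  then show ?thesis
    by (simp add: vec_eq_iff IM_def DM_def pdMn_def matrix_matrix_mult_def transpose_def)
qed

definition sB :: "pm \<Rightarrow> nat \<Rightarrow> bool" where
  "sB M n \<longleftrightarrow> (\<forall>i j k. n \<le> k \<longrightarrow> coeff (M$i$j) k = 0)"

lemma pdMn_small: "sB X n \<Longrightarrow> pdMn n X = 0"
  by (simp add: vec_eq_iff pdMn_def sB_def higher_pderiv_small)

lemma pdMn_lead: "dB X n \<Longrightarrow> pdMn n X = cm (fact n *\<^sub>R lc X n)"
  by (simp add: vec_eq_iff pdMn_def dB_def cm_def higher_pderiv_deg)

lemma coeff_cm_mult: "coeff ((cm L ** M)$i$j) k = (\<Sum>l\<in>UNIV. L$i$l * coeff (M$l$j) k)"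
  by (simp add: matrix_matrix_mult_def cm_def coeff_sum)

lemma dB_cm_mult: "dB M n \<Longrightarrow> dB (cm L ** M) n"
  unfolding dB_def matrix_matrix_mult_def cm_def
  by (auto intro!: degree_sum_le order.trans[OF degree_mult_le] simp: vec_lambda_beta)

lemma lc_cm_mult: "lc (cm L ** M) n = L ** lc M n"
  apply (simp add: vec_eq_iff coeff_cm_mult)
  apply (simp add: matrix_matrix_mult_def)
  done

lemma dB_sB: "dB A n \<Longrightarrow> dB B n \<Longrightarrow> lc A n = lc B n \<Longrightarrow> sB (A - B) n"
  unfolding sB_def
proof (intro allI impI)
  fix i j k assume A: "dB A n" and B: "dB B n" and L: "lc A n = lc B n" and k: "n \<le> k"
  show "coeff ((A - B)$i$j) k = 0"
  proof (cases "k = n")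
    case True
    then show ?thesis using L by (simp add: vec_eq_iff)
  next
    case False
    then have "k > n" using k by simp
    have "degree (A$i$j) < k" "degree (B$i$j) < k"
      using A B \<open>k > n\<close> unfolding dB_def by (meson le_less_trans)+
    then show ?thesis by (simp add: coeff_eq_0)
  qed
qed

lemma sB_Suc_decomp:
  assumes "sB X (Suc m)" "dB Pm m" "lc Pm m = mat 1"
  shows "sB (X - cm (lc X m) ** Pm) m"
proof -
  have dX: "dB X m" using assms(1) unfolding sB_def dB_def
    by (auto intro!: degree_le)
  show ?thesis
    by (rule dB_sB[OF dX dB_cm_mult[OF assms(2)]]) (simp add: lc_cm_mult assms(3))
qed



definition PPc :: "(nat \<Rightarrow> nat \<Rightarrow> real^2^2) \<Rightarrow> nat \<Rightarrow> pm" where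
  "PPc C n = (\<chi> i j. \<Sum>k\<le>n. monom (C n k $ i $ j) k)"

lemma ev_PPc: "ev (PPc C n) t = (\<Sum>k\<le>n. t^k *\<^sub>R C n k)"
  by (simp add: vec_eq_iff ev_def PPc_def poly_sum poly_monom sum_component mult.commute)

lemma dB_PPc: "dB (PPc C n) n"
  unfolding dB_def PPc_def
  by (auto intro!: degree_sum_le order.trans[OF degree_monom_le])

lemma lc_PPc: "lc (PPc C n) n = C n n"
  by (simp add: vec_eq_iff PPc_def coeff_sum coeff_monom)

lemma sB_0: "sB X 0 \<Longrightarrow> X = 0"
  by (simp add: sB_def vec_eq_iff poly_eq_iff)

lemma transpose_add': "transpose (A + B) = transpose A + transpose (B::'a::semiring_1^'n^'n)"
  by (simp add: vec_eq_iff transpose_def)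

lemma transpose_diff': "transpose (A - B) = transpose A - transpose (B::'a::ring_1^'n^'n)"
  by (simp add: vec_eq_iff transpose_def)

lemma span_orth:
  fixes \<alpha> \<beta> :: real and W :: pm
  assumes a: "\<alpha> > -1" and b: "\<beta> > -1"
    and H1: "\<And>n. C n n = mat 1"
    and H2: "\<And>n m. n \<noteq> m \<Longrightarrow> IM \<alpha> \<beta> (PPc C n ** W ** transpose (PPc C m)) = 0"
  shows "m \<le> n \<Longrightarrow> sB X m \<Longrightarrow> IM \<alpha> \<beta> (PPc C n ** W ** transpose X) = 0"
proof (induction m arbitrary: X)
  case 0
  then have "X = 0" by (simp add: sB_0)
  moreover have "transpose (0::pm) = 0" by (simp add: vec_eq_iff transpose_def)
  moreover have "(A::pm) ** 0 = 0" for A by (simp add: vec_eq_iff matrix_matrix_mult_def)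
  ultimately show ?case by simp
next
  case (Suc m)
  define L where "L = lc X m"
  define Y where "Y = X - cm L ** PPc C m"
  have sY: "sB Y m" unfolding Y_def L_def
    by (rule sB_Suc_decomp[OF Suc.prems(2) dB_PPc]) (simp add: lc_PPc H1)
  have Y0: "IM \<alpha> \<beta> (PPc C n ** W ** transpose Y) = 0"
    using Suc.IH[OF _ sY] Suc.prems by simp
  have X: "transpose X = transpose Y + transpose (PPc C m) ** cm (transpose L)"
    unfolding Y_def by (simp add: transpose_diff' matrix_transpose_mul transpose_cm)
  have "IM \<alpha> \<beta> (PPc C n ** W ** transpose X) =
        IM \<alpha> \<beta> (PPc C n ** W ** transpose Y) + IM \<alpha> \<beta> (PPc C n ** W ** transpose (PPc C m)) ** transpose L"
    unfolding X matrix_add_ldistrib IM_add[OF a b] matrix_mul_assoc IM_cm_right[OF a b] ..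
  also have "\<dots> = 0" using Y0 H2[of n m] Suc.prems by simp
  finally show ?case .
qed



lemma gram_eq:
  fixes \<alpha> \<beta> v :: real
  assumes a: "\<alpha> > -1" and b: "\<beta> > -1"
    and nz: "v \<noteq> 0" "\<alpha>+\<beta>+v+2 > 0" "\<alpha>+\<beta>-v+2 > 0" "\<alpha>+v-\<beta> \<noteq> 0" "\<alpha>-v-\<beta> \<noteq> 0"
    and H1: "\<And>n. C n n = mat 1"
    and H2: "\<And>n m. n \<noteq> m \<Longrightarrow> IM \<alpha> \<beta> (PPc C n ** WP \<alpha> \<beta> v ** transpose (PPc C m)) = 0"
  shows "IM \<alpha> \<beta> (PPc C n ** WP \<alpha> \<beta> v ** transpose (PPc C n)) ** transpose (mk2 (lam1 \<alpha> \<beta> v n) 0 0 (lam2 \<alpha> \<beta> v n))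
       = ((-1)^n * fact n) *\<^sub>R IM (\<alpha> + real n) (\<beta> + real n) (WP (\<alpha> + real n) (\<beta> + real n) v)"
proof -
  define R where "R = RR \<alpha> \<beta> v n"
  define L where "L = mk2 (lam1 \<alpha> \<beta> v n) 0 0 (lam2 \<alpha> \<beta> v n)"
  define P where "P = PPc C n"
  define W where "W = WP \<alpha> \<beta> v"
  define Psi where "Psi = WP (\<alpha> + real n) (\<beta> + real n) v"
  have lead: "dB R n" "lc R n = L" using RR_lead[of \<alpha> \<beta> v n] nz unfolding R_def L_def by auto
  define Y where "Y = R - cm L ** P"
  have sY: "sB Y n" unfolding Y_def
    by (rule dB_sB[OF lead(1) dB_cm_mult[OF dB_PPc[of C n, folded P_def]]])
       (simp add: lead(2) lc_cm_mult P_def lc_PPc H1)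
  have tR: "transpose R = transpose Y + transpose P ** cm (transpose L)"
    unfolding Y_def by (simp add: transpose_diff' matrix_transpose_mul transpose_cm)
  have e1: "IM \<alpha> \<beta> (P ** W ** transpose R) = IM \<alpha> \<beta> (P ** W ** transpose P) ** transpose L"
  proof -
    have "IM \<alpha> \<beta> (P ** W ** transpose R) = IM \<alpha> \<beta> (P ** W ** transpose Y) + IM \<alpha> \<beta> (P ** W ** transpose P) ** transpose L"
      unfolding tR matrix_add_ldistrib IM_add[OF a b] matrix_mul_assoc IM_cm_right[OF a b] ..
    moreover have "IM \<alpha> \<beta> (P ** W ** transpose Y) = 0"
      unfolding P_def W_def by (rule span_orth[OF a b H1 H2 _ sY]) auto
    ultimately show ?thesis by simp
  qed
  have a': "\<alpha> + real n > -1" and b': "\<beta> + real n > -1" using a b by auto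
  have e2: "IM \<alpha> \<beta> (P ** W ** transpose R) = ((-1)^n * fact n) *\<^sub>R IM (\<alpha> + real n) (\<beta> + real n) Psi"
  proof -
    have "W ** transpose R = transpose (R ** W)"
      by (simp add: matrix_transpose_mul W_def transpose_WP)
    also have "R ** W = DM \<alpha> \<beta> n Psi"
      unfolding R_def W_def Psi_def using nz by (intro RW) auto
    finally have "P ** W ** transpose R = P ** transpose (DM \<alpha> \<beta> n Psi)"
      by (simp add: matrix_mul_assoc[symmetric])
    then have "IM \<alpha> \<beta> (P ** W ** transpose R) = ((-1)^n) *\<^sub>R IM (\<alpha> + real n) (\<beta> + real n) (pdMn n P ** transpose Psi)"
      by (simp add: IM_DM_pair[OF a b])
    also have "pdMn n P = cm (fact n *\<^sub>R mat 1)"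
      using pdMn_lead[OF dB_PPc[of C n]] by (simp add: P_def lc_PPc H1)
    also have "transpose Psi = Psi" by (simp add: Psi_def transpose_WP)
    also have "IM (\<alpha> + real n) (\<beta> + real n) (cm (fact n *\<^sub>R mat 1) ** Psi) = fact n *\<^sub>R IM (\<alpha> + real n) (\<beta> + real n) Psi"
      by (simp add: IM_cm_left[OF a' b'] matrix_scaleR_left')
    finally show ?thesis by simp
  qed
  show ?thesis using e1 e2 unfolding P_def W_def L_def Psi_def by simp
qed



lemma wI_quad:
  fixes a b :: real
  assumes a: "a > -1" and b: "b > -1"
  shows "wI a b [:c0, c1, c2:] = c0 * Beta (a+1) (b+1) + c1 * Beta (a+2) (b+1) + c2 * Beta (a+3) (b+1)"
proof -
  have h: "((\<lambda>t. c0 * (t powr a * (1-t) powr b * t^0) + c1 * (t powr a * (1-t) powr b * t^1)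
         + c2 * (t powr a * (1-t) powr b * t^2)) has_integral
       (c0 * Beta (a + real 0 + 1) (b+1) + c1 * Beta (a + real 1 + 1) (b+1) + c2 * Beta (a + real 2 + 1) (b+1))) {0..1}"
    by (intro has_integral_add has_integral_mult_right wt_monom_has_integral a b)
  have e: "c0 * (t powr a * (1-t) powr b * t^0) + c1 * (t powr a * (1-t) powr b * t^1)
         + c2 * (t powr a * (1-t) powr b * t^2) = t powr a * (1-t) powr b * poly [:c0, c1, c2:] t" for t
    by (simp add: algebra_simps power2_eq_square)
  have "((\<lambda>t. t powr a * (1-t) powr b * poly [:c0, c1, c2:] t) has_integral
       (c0 * Beta (a+1) (b+1) + c1 * Beta (a+2) (b+1) + c2 * Beta (a+3) (b+1))) {0..1}"
    using h unfolding e by (simp add: add_ac)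
  then show ?thesis unfolding wI_def by (rule integral_unique)
qed

lemma pos_not_nonpos_Int: "(x::real) > 0 \<Longrightarrow> x \<notin> \<int>\<^sub>\<le>\<^sub>0"
  by (auto dest: nonpos_Ints_nonpos)

lemma Beta_pos: "(x::real) > 0 \<Longrightarrow> y > 0 \<Longrightarrow> Beta x y > 0"
  by (simp add: Beta_def)

lemma M0:
  fixes a b v :: real
  assumes a: "a > -1" and b: "b > -1" and p: "a+v-b \<noteq> 0" and pb: "a-v-b \<noteq> 0"
  shows "IM a b (WP a b v) = mk2 (v * Beta (a+2) (b+2) * (a+b-v+4) / (a+v-b)) 0 0
                               (-(v * Beta (a+2) (b+2) * (a+b+v+4) / (a-v-b)))"
proof -
  define B0 where "B0 = Beta (a+1) (b+1)"
  define B1 where "B1 = Beta (a+2) (b+1)"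
  define B2 where "B2 = Beta (a+3) (b+1)"
  define B3 where "B3 = Beta (a+2) (b+2)"
  have s1: "a + b + 2 > 0" "a+b+3 > 0" using a b by auto
  have r1: "(a+b+2) * B1 = (a+1) * B0"
    using Beta_plus1_left[of "a+1" "b+1"] pos_not_nonpos_Int[of "a+1"] a
    unfolding B0_def B1_def by (simp add: add_ac)
  have r2: "(a+b+3) * B2 = (a+2) * B1"
    using Beta_plus1_left[of "a+2" "b+1"] pos_not_nonpos_Int[of "a+2"] a
    unfolding B2_def B1_def by (simp add: add_ac)
  have r3: "(a+b+3) * B3 = (b+1) * B1"
    using Beta_plus1_right[of "b+1" "a+2"] pos_not_nonpos_Int[of "b+1"] b
    unfolding B3_def B1_def by (simp add: add_ac)
  have B1e: "B1 = (a+1)/(a+b+2) * B0" using r1 s1 by (simp add: field_simps)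
  have B2e': "B2 = (a+2)/(a+b+3) * B1" using r2 s1 by (simp add: field_simps)
  have B3e': "B3 = (b+1)/(a+b+3) * B1" using r3 s1 by (simp add: field_simps)
  have B2e: "B2 = (a+2)/(a+b+3) * ((a+1)/(a+b+2) * B0)" using B2e' B1e by simp
  have B3e: "B3 = (b+1)/(a+b+3) * ((a+1)/(a+b+2) * B0)" using B3e' B1e by simp
  have w11: "wI a b [:a+1, -(a+v+b+2), v * (a+v+b+2)/(a+v-b):] = v * B3 * (a+b-v+4) / (a+v-b)"
    unfolding wI_quad[OF a b] B0_def[symmetric] B1_def[symmetric] B2_def[symmetric] B1e B2e B3e
    using s1 p by (simp add: divide_simps) (simp add: algebra_simps)
  have w22: "wI a b [:a+1, -(a-v+b+2), -(v * (a-v+b+2)/(a-v-b)):] = -(v * B3 * (a+b+v+4) / (a-v-b))"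
    unfolding wI_quad[OF a b] B0_def[symmetric] B1_def[symmetric] B2_def[symmetric] B1e B2e B3e
    using s1 pb by (simp add: divide_simps) (simp add: algebra_simps)
  have w12: "wI a b [:-(a+1), a+b+2:] = 0"
    using wI_quad[OF a b, of "-(a+1)" "a+b+2" 0] r1 unfolding B0_def B1_def by (simp add: algebra_simps)
  show ?thesis unfolding WP_def IM_mkP w11 w22 w12 B3_def by simp
qed



lemma alg_final1:
  fixes s F v B X p L K Q :: real
  assumes "s \<noteq> 0" "K \<noteq> 0" "Q \<noteq> 0" "p \<noteq> 0" "L \<noteq> 0"
  shows "s * F * (v * B * X / p) / (s * L / K * Q) = F * v * B / Q * (K * X / (p * L))"
  using assms by (simp add: field_simps)

lemma alg_final2:
  fixes s F v B X p L K Q :: real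
  assumes "s \<noteq> 0" "K \<noteq> 0" "Q \<noteq> 0" "p \<noteq> 0" "L \<noteq> 0"
  shows "s * F * (- (v * B * X / p)) / (s * L / K * Q) = F * v * B / Q * (- (K * X / (p * L)))"
  using assms by (simp add: field_simps)

lemma matrix_inv_diag:
  assumes "x \<noteq> 0" "y \<noteq> 0"
  shows "matrix_inv (mk2 x 0 0 y) = mk2 (1/x) 0 0 (1/y)"
proof -
  let ?A = "mk2 x 0 0 y" and ?B = "mk2 (1/x) 0 0 (1/y)"
  have AB: "?A ** ?B = mat 1" "?B ** ?A = mat 1"
    using assms by (simp_all add: mk2_mult mk2_one)
  have uniq: "A' = ?B" if "?A ** A' = mat 1 \<and> A' ** ?A = mat 1" for A'
  proof -
    have "A' = A' ** (?A ** ?B)" using AB by simp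
    also have "\<dots> = (A' ** ?A) ** ?B" by (simp add: matrix_mul_assoc)
    also have "\<dots> = ?B" using that by simp
    finally show ?thesis .
  qed
  have "?A ** matrix_inv ?A = mat 1 \<and> matrix_inv ?A ** ?A = mat 1"
    unfolding matrix_inv_def by (rule someI[where x="?B"]) (use AB in simp)
  then show ?thesis by (rule uniq)
qed



lemma pos_aux1:
  fixes F v B Q K X p L :: real
  assumes "F > 0" "B > 0" "Q > 0" "K > 0" "X > 0" "L > 0" "v / p > 0"
  shows "0 < F * v * B / Q * (K * X / (p * L))"
proof -
  have p: "p \<noteq> 0" using assms(7) by auto
  have "F * v * B / Q * (K * X / (p * L)) = (F * B * K * X / (Q * L)) * (v / p)"
    using p assms by (simp add: field_simps)
  also have "\<dots> > 0" by (rule mult_pos_pos[OF _ assms(7)]) (use assms in simp)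
  finally show ?thesis .
qed

lemma pos_aux2:
  fixes F v B Q K X p L :: real
  assumes "F > 0" "B > 0" "Q > 0" "K > 0" "X > 0" "L > 0" "v / p < 0"
  shows "0 < F * v * B / Q * (- (K * X / (p * L)))"
proof -
  have p: "p \<noteq> 0" using assms(7) by auto
  have "F * v * B / Q * (- (K * X / (p * L))) = (F * B * K * X / (Q * L)) * (- (v / p))"
    using p assms by (simp add: field_simps)
  also have "\<dots> > 0" using assms by (intro mult_pos_pos divide_pos_pos) auto
  finally show ?thesis .
qed

theorem proposition4p1:
  fixes \<alpha> \<beta> v :: real and P :: "nat \<Rightarrow> real \<Rightarrow> real^2^2"
  assumes "\<alpha> > -1" and "\<beta> > -1"
    and "\<bar>\<alpha> - \<beta>\<bar> < \<bar>v\<bar>" and "\<bar>v\<bar> < \<alpha> + \<beta> + 2"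
    and "monic_OMP (Wmat \<alpha> \<beta> v) P"
  shows "(\<forall>n. ipW (Wmat \<alpha> \<beta> v) (P n) (P n) = mk2 (dg1 \<alpha> \<beta> v n) 0 0 (dg2 \<alpha> \<beta> v n))
    \<and> (\<forall>n. dg1 \<alpha> \<beta> v n > 0 \<and> dg2 \<alpha> \<beta> v n > 0)
    \<and> (\<forall>n m. ipW (Wmat \<alpha> \<beta> v)
                 (\<lambda>t. matrix_inv (mk2 (sqrt (dg1 \<alpha> \<beta> v n)) 0 0 (sqrt (dg2 \<alpha> \<beta> v n))) ** P n t)
                 (\<lambda>t. matrix_inv (mk2 (sqrt (dg1 \<alpha> \<beta> v m)) 0 0 (sqrt (dg2 \<alpha> \<beta> v m))) ** P m t)
               = (if n = m then mat 1 else 0))"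
proof -
  have a: "\<alpha> > -1" and b: "\<beta> > -1" using assms(1,2) .
  have mo: "\<forall>n. monic_matpoly n (P n)" and orth: "\<forall>n m. n \<noteq> m \<longrightarrow> ipW (Wmat \<alpha> \<beta> v) (P n) (P m) = 0"
    using assms(5) unfolding monic_OMP_def by auto
  have "\<forall>n. \<exists>Cn. Cn n = mat 1 \<and> (\<forall>t. P n t = (\<Sum>k\<le>n. t^k *\<^sub>R Cn k))"
    using mo unfolding monic_matpoly_def by blast
  then obtain C where C: "\<And>n. C n n = mat 1" "\<And>n t. P n t = (\<Sum>k\<le>n. t^k *\<^sub>R C n k)"
    by metis
  have Pev: "P n = ev (PPc C n)" for n by (rule ext) (simp add: ev_PPc C(2))
  have nz: "v \<noteq> 0" "\<alpha>+\<beta>+v+2 > 0" "\<alpha>+\<beta>-v+2 > 0" "\<alpha>+v-\<beta> \<noteq> 0" "\<alpha>-v-\<beta> \<noteq> 0"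
    using assms(3,4) by auto
  have H2: "IM \<alpha> \<beta> (PPc C n ** WP \<alpha> \<beta> v ** transpose (PPc C m)) = 0" if "n \<noteq> m" for n m
    using orth that unfolding Pev ipW_ev[OF a b] by blast
  have vp: "v * (\<alpha>+v-\<beta>) > 0" and vpb: "v * (\<alpha>-v-\<beta>) < 0"
  proof -
    show "v * (\<alpha>+v-\<beta>) > 0"
    proof (cases "v > 0")
      case True then show ?thesis using assms(3) by (intro mult_pos_pos) auto
    next
      case False then have "v < 0" using nz(1) by simp
      then show ?thesis using assms(3) by (intro mult_neg_neg) auto
    qed
    show "v * (\<alpha>-v-\<beta>) < 0"
    proof (cases "v > 0")
      case True then show ?thesis using assms(3) by (intro mult_pos_neg) auto
    next
      case False then have "v < 0" using nz(1) by simp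
      then show ?thesis using assms(3) by (intro mult_neg_pos) auto
    qed
  qed
  define G where "G n = IM \<alpha> \<beta> (PPc C n ** WP \<alpha> \<beta> v ** transpose (PPc C n))" for n
  have Gdiag: "G n = mk2 (dg1 \<alpha> \<beta> v n) 0 0 (dg2 \<alpha> \<beta> v n)" for n
  proof -
    define l1 where "l1 = lam1 \<alpha> \<beta> v n"
    define l2 where "l2 = lam2 \<alpha> \<beta> v n"
    define c where "c = (-1::real)^n * fact n"
    define B where "B = Beta (\<alpha> + real n + 2) (\<beta> + real n + 2)"
    define Q where "Q = pochhammer (\<alpha> + \<beta> + real n + 3) n"
    define s where "s = (-1::real)^n"
    have Qpos: "Q > 0" unfolding Q_def using a b by (intro pochhammer_pos) auto
    have s0: "s \<noteq> 0" unfolding s_def by simp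
    have l1e: "l1 = s * (\<alpha>+\<beta>+v+2+2*real n) / (\<alpha>+\<beta>+v+2) * Q"
      unfolding l1_def lam1_def s_def Q_def ..
    have l2e: "l2 = s * (\<alpha>+\<beta>-v+2+2*real n) / (\<alpha>+\<beta>-v+2) * Q"
      unfolding l2_def lam2_def s_def Q_def ..
    have l10: "l1 \<noteq> 0" unfolding l1e using s0 Qpos nz by auto
    have l20: "l2 \<noteq> 0" unfolding l2e using s0 Qpos nz by auto
    have gr: "G n ** transpose (mk2 l1 0 0 l2) = c *\<^sub>R IM (\<alpha> + real n) (\<beta> + real n) (WP (\<alpha> + real n) (\<beta> + real n) v)"
      unfolding G_def l1_def l2_def c_def by (rule gram_eq[OF a b nz C(1) H2])
    have M: "IM (\<alpha> + real n) (\<beta> + real n) (WP (\<alpha> + real n) (\<beta> + real n) v)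
       = mk2 (v * B * (\<alpha> + real n + (\<beta> + real n) - v + 4) / (\<alpha> + real n + v - (\<beta> + real n))) 0 0
             (-(v * B * (\<alpha> + real n + (\<beta> + real n) + v + 4) / (\<alpha> + real n - v - (\<beta> + real n))))"
      unfolding B_def using a b nz by (intro M0) auto
    obtain g11 g12 g21 g22 where g: "G n = mk2 g11 g12 g21 g22" using mk2_eta by metis
    from gr[unfolded g M mk2_transpose mk2_mult]
    have eqs: "g11 * l1 = c * (v * B * (\<alpha> + real n + (\<beta> + real n) - v + 4) / (\<alpha> + real n + v - (\<beta> + real n)))"
      "g12 * l2 = 0" "g21 * l1 = 0"
      "g22 * l2 = c * (-(v * B * (\<alpha> + real n + (\<beta> + real n) + v + 4) / (\<alpha> + real n - v - (\<beta> + real n))))"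
      by (simp_all add: vec2_eq)
    have g0: "g12 = 0" "g21 = 0" using eqs(2,3) l10 l20 by simp_all
    have X: "\<alpha> + real n + (\<beta> + real n) - v + 4 = \<alpha> - v + \<beta> + 2 * real n + 4"
      "\<alpha> + real n + v - (\<beta> + real n) = \<alpha> + v - \<beta>"
      "\<alpha> + real n + (\<beta> + real n) + v + 4 = \<alpha> + v + \<beta> + 2 * real n + 4"
      "\<alpha> + real n - v - (\<beta> + real n) = \<alpha> - v - \<beta>" by simp_all
    note eqs' = eqs[unfolded X]
    have g11: "g11 = dg1 \<alpha> \<beta> v n"
    proof -
      have "g11 = g11 * l1 / l1" using l10 by simp
      also have "\<dots> = c * (v * B * (\<alpha> - v + \<beta> + 2 * real n + 4) / (\<alpha> + v - \<beta>)) / l1"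
        using eqs'(1) by simp
      also have "\<dots> = s * fact n * (v * B * (\<alpha> - v + \<beta> + 2 * real n + 4) / (\<alpha> + v - \<beta>)) / (s * (\<alpha>+\<beta>+v+2+2*real n) / (\<alpha>+\<beta>+v+2) * Q)"
        unfolding l1e c_def s_def ..
      also have "\<dots> = fact n * v * B / Q * ((\<alpha>+\<beta>+v+2) * (\<alpha> - v + \<beta> + 2 * real n + 4) / ((\<alpha> + v - \<beta>) * (\<alpha>+\<beta>+v+2+2*real n)))"
        by (rule alg_final1) (use s0 nz Qpos in auto)
      also have "\<dots> = dg1 \<alpha> \<beta> v n"
        unfolding dg1_def cfac_def B_def Q_def by (simp add: algebra_simps)
      finally show ?thesis .
    qed
    have g22: "g22 = dg2 \<alpha> \<beta> v n"
    proof -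
      have "g22 = g22 * l2 / l2" using l20 by simp
      also have "\<dots> = c * (-(v * B * (\<alpha> + v + \<beta> + 2 * real n + 4) / (\<alpha> - v - \<beta>))) / l2"
        using eqs'(4) by simp
      also have "\<dots> = s * fact n * (-(v * B * (\<alpha> + v + \<beta> + 2 * real n + 4) / (\<alpha> - v - \<beta>))) / (s * (\<alpha>+\<beta>-v+2+2*real n) / (\<alpha>+\<beta>-v+2) * Q)"
        unfolding l2e c_def s_def ..
      also have "\<dots> = fact n * v * B / Q * (-((\<alpha>+\<beta>-v+2) * (\<alpha> + v + \<beta> + 2 * real n + 4) / ((\<alpha> - v - \<beta>) * (\<alpha>+\<beta>-v+2+2*real n))))"
        by (rule alg_final2) (use s0 nz Qpos in auto)
      also have "\<dots> = dg2 \<alpha> \<beta> v n"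
        unfolding dg2_def cfac_def B_def Q_def by (simp add: algebra_simps)
      finally show ?thesis .
    qed
    show ?thesis using g g0 g11 g22 by simp
  qed
  have ipG: "ipW (Wmat \<alpha> \<beta> v) (P n) (P n) = mk2 (dg1 \<alpha> \<beta> v n) 0 0 (dg2 \<alpha> \<beta> v n)" for n
    using Gdiag[of n] unfolding Pev ipW_ev[OF a b] G_def .
  have pos: "dg1 \<alpha> \<beta> v n > 0 \<and> dg2 \<alpha> \<beta> v n > 0" for n
  proof
    have F: "fact n > (0::real)" by simp
    have B: "Beta (\<alpha> + real n + 2) (\<beta> + real n + 2) > 0" using a b by (intro Beta_pos) auto
    have Q: "pochhammer (\<alpha> + \<beta> + real n + 3) n > 0" using a b by (intro pochhammer_pos) auto
    have q1: "v / (\<alpha>+v-\<beta>) > 0" using vp by (simp add: zero_less_divide_iff zero_less_mult_iff)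
    have q2: "v / (\<alpha>-v-\<beta>) < 0" using vpb by (simp add: divide_less_0_iff mult_less_0_iff)
    show "dg1 \<alpha> \<beta> v n > 0" unfolding dg1_def cfac_def
      by (rule pos_aux1[OF F B Q _ _ _ q1]) (use nz in auto)
    show "dg2 \<alpha> \<beta> v n > 0" unfolding dg2_def cfac_def
      by (rule pos_aux2[OF F B Q _ _ _ q2]) (use nz in auto)
  qed
  have inv: "matrix_inv (mk2 (sqrt (dg1 \<alpha> \<beta> v n)) 0 0 (sqrt (dg2 \<alpha> \<beta> v n)))
      = mk2 (1 / sqrt (dg1 \<alpha> \<beta> v n)) 0 0 (1 / sqrt (dg2 \<alpha> \<beta> v n))" for n
    using pos[of n] by (intro matrix_inv_diag) auto
  define A where "A n = mk2 (1 / sqrt (dg1 \<alpha> \<beta> v n)) 0 0 (1 / sqrt (dg2 \<alpha> \<beta> v n))" for n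
  have fn: "(\<lambda>t. matrix_inv (mk2 (sqrt (dg1 \<alpha> \<beta> v n)) 0 0 (sqrt (dg2 \<alpha> \<beta> v n))) ** P n t)
      = ev (cm (A n) ** PPc C n)" for n
    unfolding inv A_def[symmetric] by (rule ext) (simp add: ev_mult ev_cm Pev)
  have ip2: "ipW (Wmat \<alpha> \<beta> v)
                 (\<lambda>t. matrix_inv (mk2 (sqrt (dg1 \<alpha> \<beta> v n)) 0 0 (sqrt (dg2 \<alpha> \<beta> v n))) ** P n t)
                 (\<lambda>t. matrix_inv (mk2 (sqrt (dg1 \<alpha> \<beta> v m)) 0 0 (sqrt (dg2 \<alpha> \<beta> v m))) ** P m t)
           = A n ** G' ** transpose (A m)"
    if "G' = IM \<alpha> \<beta> (PPc C n ** WP \<alpha> \<beta> v ** transpose (PPc C m))" for n m G'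
  proof -
    have "cm (A n) ** PPc C n ** WP \<alpha> \<beta> v ** transpose (cm (A m) ** PPc C m)
        = cm (A n) ** (PPc C n ** WP \<alpha> \<beta> v ** transpose (PPc C m)) ** cm (transpose (A m))"
      by (simp add: matrix_transpose_mul transpose_cm matrix_mul_assoc)
    then show ?thesis
      unfolding fn ipW_ev[OF a b] that by (simp add: IM_cm_left[OF a b] IM_cm_right[OF a b])
  qed
  have orthn: "ipW (Wmat \<alpha> \<beta> v)
                 (\<lambda>t. matrix_inv (mk2 (sqrt (dg1 \<alpha> \<beta> v n)) 0 0 (sqrt (dg2 \<alpha> \<beta> v n))) ** P n t)
                 (\<lambda>t. matrix_inv (mk2 (sqrt (dg1 \<alpha> \<beta> v m)) 0 0 (sqrt (dg2 \<alpha> \<beta> v m))) ** P m t)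
               = (if n = m then mat 1 else 0)" for n m
  proof (cases "n = m")
    case True
    have d1: "sqrt (dg1 \<alpha> \<beta> v n) * sqrt (dg1 \<alpha> \<beta> v n) = dg1 \<alpha> \<beta> v n"
      and d2: "sqrt (dg2 \<alpha> \<beta> v n) * sqrt (dg2 \<alpha> \<beta> v n) = dg2 \<alpha> \<beta> v n"
      using pos[of n] by auto
    have "A n ** mk2 (dg1 \<alpha> \<beta> v n) 0 0 (dg2 \<alpha> \<beta> v n) ** transpose (A n) = mat 1"
      unfolding A_def mk2_transpose mk2_mult mk2_one using pos[of n] d1 d2
      by (simp add: field_simps)
    then show ?thesis using ip2[of _ n n] True Gdiag[of n] unfolding G_def by simp
  next
    case False
    have "(X::real^2^2) ** 0 ** Y = 0" for X Y
      by (simp add: vec_eq_iff matrix_matrix_mult_def)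
    then show ?thesis using ip2[of _ n m] False H2[OF False] by simp
  qed
  show ?thesis using ipG pos orthn by blast
qed


end
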